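(* Let $k\ge 2$ be an integer, let $(G,\sigma)$ be a signed graph, and let $\beta$ be a $\mathbb{Z}_{4k}$-pc-boundary of $2G$ such that $\beta(v)\equiv 2k\cdot p^+(v)\pmod{4k}$ for every $v\in V(G)$. If $2G$ admits a strongly connected $(4k,\beta)$-orientation, then $\phi_c(G,\sigma)<\frac{2k}{k-1}$.
   Context: Graphs may have parallel edges but no loops. A signed graph $(G,\sigma)$ has $\sigma:E(G)\to\{+1,-1\}$; $p^+(v)$ is the number of positive edges incident with $v$. $2G$ is obtained from $G$ by replacing every edge with two parallel edges. For a graph $H$ and a positive integer $m$, a $\mathbb{Z}_{2m}$-pc-boundary of $H$ is a map $\beta:V(H)\to\{0,\pm1,\dots,\pm m\}$ with $\beta(v)\equiv d_H(v)\pmod 2$ for all $v$ and $\sum_v\beta(v)\equiv0\pmod{2m}$; a $(2m,\beta)$-orientation is an orientation $D$ of $H$ with $d^+_D(v)-d^-_D(v)\equiv\beta(v)\pmod{2m}$ for all $v$. An orientation $D$ is strongly connected if $d^+_D(S)>0$ and $d^-_D(S)>0$ for every nonempty proper subset $S\subset V(H)$. For positive integers $p,q$ with $p$ even, a circular $\frac pq$-flow of $(G,\sigma)$ is a pair $(D,f)$ with $D$ an orientation of $G$ and $f:E(G)\to\mathbb{Z}$ such that $|f(e)|\in\{q,\dots,p-q\}$ for every positive edge, $|f(e)|\in\{0,\dots,\frac p2-q\}\cup\{\frac p2+q,\dots,p-1\}$ for every negative edge, and $\sum_{(v,w)\in D}f(vw)-\sum_{(u,v)\in D}f(uv)\equiv0\pmod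 p$ for every vertex $v$. The circular flow index $\phi_c(G,\sigma)$ is the minimum of $\frac pq$ over all circular $\frac pq$-flows of $(G,\sigma)$. *)

theory Defs
  imports Complex_Main
begin

text \<open>Parallel edges are distinct elements of E with the same ends.\<close>

definition loopless_graph :: "'v set \<Rightarrow> 'e set \<Rightarrow> ('e \<Rightarrow> 'v \<times> 'v) \<Rightarrow> bool" where
  "loopless_graph V E ends \<longleftrightarrow> finite V \<and> finite E \<and>
     (\<forall>e\<in>E. fst (ends e) \<in> V \<and> snd (ends e) \<in> V \<and> fst (ends e) \<noteq> snd (ends e))"

definition incident :: "('e \<Rightarrow> 'v \<times> 'v) \<Rightarrow> 'e \<Rightarrow> 'v \<Rightarrow> bool" where
  "incident ends e v \<longleftrightarrow> fst (ends e) = v \<or> snd (ends e) = v"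

definition degree :: "'e set \<Rightarrow> ('e \<Rightarrow> 'v \<times> 'v) \<Rightarrow> 'v \<Rightarrow> nat" where
  "degree E ends v = card {e\<in>E. incident ends e v}"

text \<open>The doubled graph 2G: every edge e is replaced by the two parallel edges (e,False), (e,True).\<close>

definition double_edges :: "'e set \<Rightarrow> ('e \<times> bool) set" where
  "double_edges E = E \<times> UNIV"

definition double_ends :: "('e \<Rightarrow> 'v \<times> 'v) \<Rightarrow> ('e \<times> bool) \<Rightarrow> 'v \<times> 'v" where
  "double_ends ends x = ends (fst x)"

text \<open>Signed graphs: sigma e = True means e is positive (sign +1), False means negative (-1).\<close>

definition pos_degree :: "'e set \<Rightarrow> ('e \<Rightarrow> 'v \<times> 'v) \<Rightarrow> ('e \<Rightarrow> bool) \<Rightarrow> 'v \<Rightarrow> nat" where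
  "pos_degree E ends sigma v = card {e\<in>E. sigma e \<and> incident ends e v}"

definition tail :: "('e \<Rightarrow> 'v \<times> 'v) \<Rightarrow> ('e \<Rightarrow> bool) \<Rightarrow> 'e \<Rightarrow> 'v" where
  "tail ends D e = (if D e then fst (ends e) else snd (ends e))"

definition head :: "('e \<Rightarrow> 'v \<times> 'v) \<Rightarrow> ('e \<Rightarrow> bool) \<Rightarrow> 'e \<Rightarrow> 'v" where
  "head ends D e = (if D e then snd (ends e) else fst (ends e))"

definition outdeg :: "'e set \<Rightarrow> ('e \<Rightarrow> 'v \<times> 'v) \<Rightarrow> ('e \<Rightarrow> bool) \<Rightarrow> 'v \<Rightarrow> nat" where
  "outdeg E ends D v = card {e\<in>E. tail ends D e = v}"

definition indeg :: "'e set \<Rightarrow> ('e \<Rightarrow> 'v \<times> 'v) \<Rightarrow> ('e \<Rightarrow> bool) \<Rightarrow> 'v \<Rightarrow> nat" where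
  "indeg E ends D v = card {e\<in>E. head ends D e = v}"

definition outdeg_set :: "'e set \<Rightarrow> ('e \<Rightarrow> 'v \<times> 'v) \<Rightarrow> ('e \<Rightarrow> bool) \<Rightarrow> 'v set \<Rightarrow> nat" where
  "outdeg_set E ends D S = card {e\<in>E. tail ends D e \<in> S \<and> head ends D e \<notin> S}"

definition indeg_set :: "'e set \<Rightarrow> ('e \<Rightarrow> 'v \<times> 'v) \<Rightarrow> ('e \<Rightarrow> bool) \<Rightarrow> 'v set \<Rightarrow> nat" where
  "indeg_set E ends D S = card {e\<in>E. tail ends D e \<notin> S \<and> head ends D e \<in> S}"

definition strongly_connected_orientation ::
  "'v set \<Rightarrow> 'e set \<Rightarrow> ('e \<Rightarrow> 'v \<times> 'v) \<Rightarrow> ('e \<Rightarrow> bool) \<Rightarrow> bool" where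
  "strongly_connected_orientation V E ends D \<longleftrightarrow>
     (\<forall>S. S \<noteq> {} \<and> S \<subset> V \<longrightarrow> outdeg_set E ends D S > 0 \<and> indeg_set E ends D S > 0)"

definition pc_boundary :: "nat \<Rightarrow> 'v set \<Rightarrow> 'e set \<Rightarrow> ('e \<Rightarrow> 'v \<times> 'v) \<Rightarrow> ('v \<Rightarrow> int) \<Rightarrow> bool" where
  "pc_boundary m V E ends beta \<longleftrightarrow>
     (\<forall>v\<in>V. \<bar>beta v\<bar> \<le> int m \<and> beta v mod 2 = int (degree E ends v) mod 2) \<and>
     (\<Sum>v\<in>V. beta v) mod (2 * int m) = 0"

text \<open>(2m,beta)-orientation (the modulus N stands for 2m).\<close>

definition beta_orientation :: "nat \<Rightarrow> 'v set \<Rightarrow> 'e set \<Rightarrow> ('e \<Rightarrow> 'v \<times> 'v) \<Rightarrow> ('v \<Rightarrow> int) \<Rightarrow> ('e \<Rightarrow> bool) \<Rightarrow> bool" where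
  "beta_orientation N V E ends beta D \<longleftrightarrow>
     (\<forall>v\<in>V. (int (outdeg E ends D v) - int (indeg E ends D v)) mod int N = beta v mod int N)"

definition circular_flow ::
  "nat \<Rightarrow> nat \<Rightarrow> 'v set \<Rightarrow> 'e set \<Rightarrow> ('e \<Rightarrow> 'v \<times> 'v) \<Rightarrow> ('e \<Rightarrow> bool) \<Rightarrow> ('e \<Rightarrow> bool) \<Rightarrow> ('e \<Rightarrow> int) \<Rightarrow> bool" where
  "circular_flow p q V E ends sigma D f \<longleftrightarrow>
     (\<forall>e\<in>E. sigma e \<longrightarrow> \<bar>f e\<bar> \<in> {int q .. int p - int q}) \<and>
     (\<forall>e\<in>E. \<not> sigma e \<longrightarrow>
        \<bar>f e\<bar> \<in> {0 .. int p div 2 - int q} \<union> {int p div 2 + int q .. int p - 1}) \<and>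
     (\<forall>v\<in>V. ((\<Sum>e\<in>{e\<in>E. tail ends D e = v}. f e) - (\<Sum>e\<in>{e\<in>E. head ends D e = v}. f e))
              mod int p = 0)"

definition circular_flow_index :: "'v set \<Rightarrow> 'e set \<Rightarrow> ('e \<Rightarrow> 'v \<times> 'v) \<Rightarrow> ('e \<Rightarrow> bool) \<Rightarrow> real" where
  "circular_flow_index V E ends sigma =
     Inf {real p / real q | p q. p > 0 \<and> q > 0 \<and> even p \<and>
                                 (\<exists>D f. circular_flow p q V E ends sigma D f)}"

end

theory Submission
  imports Defs
begin

inductive walk :: "'a set \<Rightarrow> ('a \<Rightarrow> 'v) \<Rightarrow> ('a \<Rightarrow> 'v) \<Rightarrow> 'v \<Rightarrow> 'a list \<Rightarrow> 'v \<Rightarrow> bool"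
  for A tf hf where
  wnil: "walk A tf hf x [] x"
| wcons: "a \<in> A \<Longrightarrow> tf a = x \<Longrightarrow> walk A tf hf (hf a) xs y \<Longrightarrow> walk A tf hf x (a # xs) y"

lemma walk_append:
  "walk A tf hf x xs y \<Longrightarrow> a \<in> A \<Longrightarrow> tf a = y \<Longrightarrow> walk A tf hf x (xs @ [a]) (hf a)"
  by (induction rule: walk.induct) (auto intro: walk.intros)

lemma walk_set: "walk A tf hf x xs y \<Longrightarrow> set xs \<subseteq> A"
  by (induction rule: walk.induct) auto

lemma walk_count:
  "walk A tf hf x xs y \<Longrightarrow>
   int (length (filter (\<lambda>b. tf b = v) xs)) + (if v = y then 1 else 0)
   = int (length (filter (\<lambda>b. hf b = v) xs)) + (if v = x then 1 else 0)"
  by (induction rule: walk.induct) auto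

lemma walk_exists:
  assumes fin: "finite V"
    and arcs: "\<forall>a\<in>A. tf a \<in> V \<and> hf a \<in> V"
    and cut: "\<forall>S. S \<noteq> {} \<and> S \<subset> V \<longrightarrow> card {a\<in>A. tf a \<in> S \<and> hf a \<notin> S} > 0"
    and x: "x \<in> V" and y: "y \<in> V"
  shows "\<exists>xs. walk A tf hf x xs y"
proof (rule ccontr)
  assume ny: "\<not> ?thesis"
  define S where "S = {z\<in>V. \<exists>xs. walk A tf hf x xs z}"
  have "walk A tf hf x [] x" by (rule wnil)
  then have xS: "x \<in> S" using x unfolding S_def by blast
  have yS: "y \<notin> S" using ny unfolding S_def by blast
  have SV: "S \<subseteq> V" unfolding S_def by blast
  have "S \<noteq> {} \<and> S \<subset> V" using xS yS SV y by blast
  then have "card {a\<in>A. tf a \<in> S \<and> hf a \<notin> S} > 0" using cut by simp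
  then have "{a\<in>A. tf a \<in> S \<and> hf a \<notin> S} \<noteq> {}" by (simp add: card_gt_0_iff)
  then obtain a where a: "a \<in> A" "tf a \<in> S" "hf a \<notin> S" by blast
  have "\<exists>xs. walk A tf hf x xs (tf a)" using a(2) unfolding S_def by simp
  then obtain xs where "walk A tf hf x xs (tf a)" by (elim exE)
  then have "walk A tf hf x (xs @ [a]) (hf a)" by (rule walk_append[OF _ a(1) refl])
  moreover have "hf a \<in> V" using arcs a(1) by blast
  ultimately have "hf a \<in> S" unfolding S_def by (intro CollectI conjI exI)
  then show False using a(3) by blast
qed

lemma sum_count_filter:
  "set xs \<subseteq> A \<Longrightarrow> finite A \<Longrightarrow>
   (\<Sum>b\<in>{b\<in>A. P b}. count_list xs b) = length (filter P xs)"
proof (induction xs)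
  case Nil then show ?case by simp
next
  case (Cons a xs)
  have "(\<Sum>b\<in>{b\<in>A. P b}. count_list (a # xs) b)
      = (\<Sum>b\<in>{b\<in>A. P b}. count_list xs b + (if a = b then 1 else 0))"
    by (rule sum.cong) auto
  also have "\<dots> = (\<Sum>b\<in>{b\<in>A. P b}. count_list xs b) + (\<Sum>b\<in>{b\<in>A. P b}. (if a = b then 1 else 0))"
    by (simp add: sum.distrib)
  also have "(\<Sum>b\<in>{b\<in>A. P b}. (if a = b then 1 else 0)) = (if P a then 1 else (0::nat))"
    using Cons.prems by (simp add: sum.delta)
  finally have eq: "(\<Sum>b\<in>{b\<in>A. P b}. count_list (a # xs) b)
      = (\<Sum>b\<in>{b\<in>A. P b}. count_list xs b) + (if P a then 1 else 0)" .
  have ih: "(\<Sum>b\<in>{b\<in>A. P b}. count_list xs b) = length (filter P xs)"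
    using Cons.IH Cons.prems by simp
  show ?case unfolding eq ih by simp
qed

lemma circulation_exists:
  assumes fin: "finite V" and finA: "finite A"
    and arcs: "\<forall>a\<in>A. tf a \<in> V \<and> hf a \<in> V"
    and cut: "\<forall>S. S \<noteq> {} \<and> S \<subset> V \<longrightarrow> card {a\<in>A. tf a \<in> S \<and> hf a \<notin> S} > 0"
  shows "\<exists>c::'a \<Rightarrow> int. \<exists>C. (\<forall>a\<in>A. 1 \<le> c a \<and> c a \<le> C) \<and>
     (\<forall>v. (\<Sum>b\<in>{b\<in>A. tf b = v}. c b) = (\<Sum>b\<in>{b\<in>A. hf b = v}. c b))"
proof -
  have "\<forall>a\<in>A. \<exists>xs. walk A tf hf (hf a) xs (tf a)"
    using walk_exists[OF fin arcs cut] arcs by blast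
  then obtain W where W: "\<And>a. a \<in> A \<Longrightarrow> walk A tf hf (hf a) (W a) (tf a)" by metis
  define c where "c b = int (\<Sum>a\<in>A. count_list (a # W a) b)" for b
  define C where "C = int (\<Sum>a\<in>A. length (a # W a))"
  have setW: "set (a # W a) \<subseteq> A" if "a \<in> A" for a
    using walk_set[OF W[OF that]] that by auto
  have bnd: "1 \<le> c a \<and> c a \<le> C" if "a \<in> A" for a
  proof
    have "count_list (a # W a) a \<le> (\<Sum>a'\<in>A. count_list (a' # W a') a)"
      by (rule member_le_sum) (use that finA in auto)
    moreover have "1 \<le> count_list (a # W a) a" by simp
    ultimately show "1 \<le> c a" unfolding c_def by linarith
    have "(\<Sum>a'\<in>A. count_list (a' # W a') a) \<le> (\<Sum>a'\<in>A. length (a' # W a'))"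
      by (rule sum_mono) (rule count_le_length)
    then show "c a \<le> C" unfolding c_def C_def by linarith
  qed
  have cons: "(\<Sum>b\<in>{b\<in>A. tf b = v}. c b) = (\<Sum>b\<in>{b\<in>A. hf b = v}. c b)" for v
  proof -
    have eq: "(\<Sum>b\<in>{b\<in>A. P b}. c b) = (\<Sum>a\<in>A. int (length (filter P (a # W a))))" for P
    proof -
      have "(\<Sum>b\<in>{b\<in>A. P b}. c b) = int (\<Sum>b\<in>{b\<in>A. P b}. \<Sum>a\<in>A. count_list (a # W a) b)"
        by (simp add: c_def)
      also have "(\<Sum>b\<in>{b\<in>A. P b}. \<Sum>a\<in>A. count_list (a # W a) b)
          = (\<Sum>a\<in>A. \<Sum>b\<in>{b\<in>A. P b}. count_list (a # W a) b)"
        by (rule sum.swap)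
      also have "\<dots> = (\<Sum>a\<in>A. length (filter P (a # W a)))"
        by (rule sum.cong[OF refl], rule sum_count_filter[OF setW finA])
      finally show ?thesis by simp
    qed
    have "int (length (filter (\<lambda>b. tf b = v) (a # W a))) = int (length (filter (\<lambda>b. hf b = v) (a # W a)))"
      if "a \<in> A" for a
      using walk_count[OF W[OF that], of v] by auto
    then show ?thesis unfolding eq by (rule sum.cong[OF refl])
  qed
  show ?thesis
    by (rule exI[of _ c], rule exI[of _ C]) (use bnd cons in blast)
qed


lemma sum_bool_prod:
  assumes "finite E"
  shows "(\<Sum>x\<in>E \<times> (UNIV::bool set). F x) = (\<Sum>e\<in>E. F (e, False) + F (e, True))"
proof -
  have "(\<Sum>x\<in>E \<times> (UNIV::bool set). F x) = (\<Sum>e\<in>E. \<Sum>b\<in>(UNIV::bool set). F (e, b))"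
    by (simp add: sum.cartesian_product split_def)
  also have "\<dots> = (\<Sum>e\<in>E. F (e, False) + F (e, True))"
    by (simp add: UNIV_bool)
  finally show ?thesis .
qed

lemma gb_aux:
  fixes c1 c2 N :: int
  assumes "1 \<le> c1" "c1 \<le> N - 1" "1 \<le> c2" "c2 \<le> N - 1"
  shows "\<bar>(if d1 then 1 else -1) * (N - c1) + (if d2 then 1 else -1) * (N - c2)\<bar> \<le> 2 * N - 2"
  using assms by (cases d1; cases d2) (simp_all add: abs_le_iff)

theorem theorem2p8:
  fixes k :: nat and V :: "'v set" and E :: "'e set" and ends :: "'e \<Rightarrow> 'v \<times> 'v"
    and sigma :: "'e \<Rightarrow> bool" and beta :: "'v \<Rightarrow> int"
  assumes "k \<ge> 2"
    and "loopless_graph V E ends"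
    and "pc_boundary (2 * k) V (double_edges E) (double_ends ends) beta"
    and "\<forall>v\<in>V. beta v mod (4 * int k) = (2 * int k * int (pos_degree E ends sigma v)) mod (4 * int k)"
    and "\<exists>D. strongly_connected_orientation V (double_edges E) (double_ends ends) D \<and>
             beta_orientation (4 * k) V (double_edges E) (double_ends ends) beta D"
  shows "circular_flow_index V E ends sigma < 2 * real k / (real k - 1)"
proof -
  note k = assms(1)
  obtain D where SC: "strongly_connected_orientation V (double_edges E) (double_ends ends) D"
    and BO: "beta_orientation (4 * k) V (double_edges E) (double_ends ends) beta D"
    using assms(5) by blast
  have finV: "finite V" and finE: "finite E"
    and ends_ok: "\<And>e. e \<in> E \<Longrightarrow> fst (ends e) \<in> V \<and> snd (ends e) \<in> V \<and> fst (ends e) \<noteq> snd (ends e)"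
    using assms(2) by (auto simp: loopless_graph_def)
  define E2 where "E2 = double_edges E"
  define en2 where "en2 = double_ends ends"
  define tf where "tf = tail en2 D"
  define hf where "hf = head en2 D"
  have E2: "E2 = E \<times> UNIV" by (simp add: E2_def double_edges_def)
  have finE2: "finite E2" using finE by (simp add: E2)
  have arcs: "\<forall>a\<in>E2. tf a \<in> V \<and> hf a \<in> V"
    using ends_ok by (auto simp: E2 tf_def hf_def tail_def head_def en2_def double_ends_def)
  have cut: "\<forall>S. S \<noteq> {} \<and> S \<subset> V \<longrightarrow> card {a\<in>E2. tf a \<in> S \<and> hf a \<notin> S} > 0"
    using SC by (auto simp: strongly_connected_orientation_def outdeg_set_def E2_def en2_def tf_def hf_def)
  obtain c C0 where cb: "\<forall>a\<in>E2. 1 \<le> c a \<and> c a \<le> (C0::int)"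
    and cc: "\<forall>v. (\<Sum>b\<in>{b\<in>E2. tf b = v}. c b) = (\<Sum>b\<in>{b\<in>E2. hf b = v}. c b)"
    using circulation_exists[OF finV finE2 arcs cut] by blast
  define Nn where "Nn = nat C0 + 1"
  define N where "N = int Nn"
  have cN: "\<And>a. a \<in> E2 \<Longrightarrow> 1 \<le> c a \<and> c a \<le> N - 1"
    using cb by (auto simp: N_def Nn_def)
  have N2: "N \<ge> 1" by (simp add: N_def Nn_def)
  define p where "p = 4 * k * Nn"
  define q where "q = 2 * (k - 1) * Nn + 1"
  define KN where "KN = int k * N"
  have pint: "int p = 4 * KN" by (simp add: p_def KN_def N_def)
  have qint0: "int q = 2 * int (k - 1) * N + 1" by (simp add: q_def N_def)
  have km: "int (k - 1) = int k - 1" using k by simp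
  have qint: "int q = 2 * KN - 2 * N + 1" unfolding qint0 km KN_def by (simp add: algebra_simps)
  have k2: "2 \<le> int k" using k by simp
  have KNge: "KN \<ge> 2 * N" using mult_right_mono[OF k2, of N] N2 unfolding KN_def by simp
  define s where "s x = (if D x then 1 else -1::int)" for x
  define phi where "phi x = N - c x" for x
  define g where "g e = s (e, False) * phi (e, False) + s (e, True) * phi (e, True)" for e
  define f where "f e = g e + (if sigma e then 2 * KN else 0)" for e
  define DG where "DG = (\<lambda>e::'e. True)"
  have gb: "\<bar>g e\<bar> \<le> 2 * N - 2" if "e \<in> E" for e
  proof -
    have "(e, False) \<in> E2" "(e, True) \<in> E2" using that by (auto simp: E2)
    then have b1: "1 \<le> c (e, False) \<and> c (e, False) \<le> N - 1" and b2: "1 \<le> c (e, True) \<and> c (e, True) \<le> N - 1"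
      using cN by auto
    show ?thesis unfolding g_def s_def phi_def
      using gb_aux[of "c (e, False)" N "c (e, True)" "D (e, False)" "D (e, True)"] b1 b2 by simp
  qed
  have pdiv: "int p div 2 = 2 * KN" unfolding pint by simp
  have fpos: "\<bar>f e\<bar> \<in> {int q .. int p - int q}" if "e \<in> E" "sigma e" for e
  proof -
    have "\<bar>g e\<bar> \<le> 2 * N - 2" using gb that by blast
    then have g1: "g e \<le> 2 * N - 2" and g2: "- (2 * N - 2) \<le> g e" by (simp_all add: abs_le_iff)
    have fe: "f e = g e + 2 * KN" using that by (simp add: f_def)
    have "f e > 0" using g2 KNge N2 fe by linarith
    then have "\<bar>f e\<bar> = g e + 2 * KN" using fe by simp
    moreover have "int q \<le> g e + 2 * KN" "g e + 2 * KN \<le> int p - int q"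
      using g1 g2 unfolding pint qint by linarith+
    ultimately show ?thesis by simp
  qed
  have fneg: "\<bar>f e\<bar> \<in> {0 .. int p div 2 - int q} \<union> {int p div 2 + int q .. int p - 1}"
    if "e \<in> E" "\<not> sigma e" for e
  proof -
    have "\<bar>g e\<bar> \<le> 2 * N - 2" using gb that by blast
    moreover have fe: "f e = g e" using that by (simp add: f_def)
    moreover have "int p div 2 - int q = 2 * N - 1" unfolding pdiv qint by simp
    ultimately have "\<bar>f e\<bar> \<in> {0 .. int p div 2 - int q}" by simp
    then show ?thesis by (rule UnI1)
  qed
  have bnd: "((\<Sum>e\<in>{e\<in>E. tail ends DG e = v}. f e) - (\<Sum>e\<in>{e\<in>E. head ends DG e = v}. f e))
              mod int p = 0" if v: "v \<in> V" for v
  proof -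
    have tDG: "tail ends DG e = fst (ends e)" "head ends DG e = snd (ends e)" for e
      by (simp_all add: tail_def head_def DG_def)
    define out where "out = int (outdeg E2 en2 D v)"
    define inn where "inn = int (indeg E2 en2 D v)"
    define a where "a = card {e\<in>E. sigma e \<and> fst (ends e) = v}"
    define b where "b = card {e\<in>E. sigma e \<and> snd (ends e) = v}"
    define H where "H x = (if tf x = v then phi x else 0) - (if hf x = v then phi x else 0)" for x
    have A: "(\<Sum>e\<in>{e\<in>E. fst (ends e) = v}. g e) - (\<Sum>e\<in>{e\<in>E. snd (ends e) = v}. g e) = N * (out - inn)"
    proof -
      have "(\<Sum>e\<in>{e\<in>E. fst (ends e) = v}. g e) - (\<Sum>e\<in>{e\<in>E. snd (ends e) = v}. g e)
          = (\<Sum>e\<in>E. (if fst (ends e) = v then g e else 0) - (if snd (ends e) = v then g e else 0))"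
        using finE by (simp add: sum.inter_filter sum_subtractf)
      also have "\<dots> = (\<Sum>e\<in>E. H (e, False) + H (e, True))"
        by (rule sum.cong[OF refl])
          (auto simp: g_def H_def tf_def hf_def tail_def head_def en2_def double_ends_def s_def)
      also have "\<dots> = (\<Sum>x\<in>E2. H x)" unfolding E2 by (rule sum_bool_prod[OF finE, symmetric])
      also have "\<dots> = (\<Sum>x\<in>{x\<in>E2. tf x = v}. phi x) - (\<Sum>x\<in>{x\<in>E2. hf x = v}. phi x)"
        using finE2 by (simp add: H_def sum.inter_filter sum_subtractf)
      also have "\<dots> = (N * out - (\<Sum>x\<in>{x\<in>E2. tf x = v}. c x)) - (N * inn - (\<Sum>x\<in>{x\<in>E2. hf x = v}. c x))"
        by (simp add: phi_def sum_subtractf out_def inn_def outdeg_def indeg_def tf_def hf_def mult.commute)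
      also have "\<dots> = N * (out - inn)" using cc by (simp add: algebra_simps)
      finally show ?thesis .
    qed
    have Bp: "(\<Sum>e\<in>{e\<in>E. fst (ends e) = v}. (if sigma e then 2 * KN else 0))
            = 2 * KN * int a"
    proof -
      have "(\<Sum>e\<in>{e\<in>E. fst (ends e) = v}. (if sigma e then 2 * KN else 0))
          = (\<Sum>e\<in>{e\<in>{e\<in>E. fst (ends e) = v}. sigma e}. 2 * KN)"
        using finE by (intro sum.inter_filter[symmetric]) simp
      also have "{e\<in>{e\<in>E. fst (ends e) = v}. sigma e} = {e\<in>E. sigma e \<and> fst (ends e) = v}" by auto
      finally show ?thesis by (simp add: a_def)
    qed
    have Bq: "(\<Sum>e\<in>{e\<in>E. snd (ends e) = v}. (if sigma e then 2 * KN else 0))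
            = 2 * KN * int b"
    proof -
      have "(\<Sum>e\<in>{e\<in>E. snd (ends e) = v}. (if sigma e then 2 * KN else 0))
          = (\<Sum>e\<in>{e\<in>{e\<in>E. snd (ends e) = v}. sigma e}. 2 * KN)"
        using finE by (intro sum.inter_filter[symmetric]) simp
      also have "{e\<in>{e\<in>E. snd (ends e) = v}. sigma e} = {e\<in>E. sigma e \<and> snd (ends e) = v}" by auto
      finally show ?thesis by (simp add: b_def)
    qed
    have C: "a + b = pos_degree E ends sigma v"
    proof -
      have "{e\<in>E. sigma e \<and> incident ends e v} = {e\<in>E. sigma e \<and> fst (ends e) = v} \<union> {e\<in>E. sigma e \<and> snd (ends e) = v}"
        by (auto simp: incident_def)
      moreover have "{e\<in>E. sigma e \<and> fst (ends e) = v} \<inter> {e\<in>E. sigma e \<and> snd (ends e) = v} = {}"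
        using ends_ok by fastforce
      ultimately show ?thesis unfolding pos_degree_def a_def b_def
        by (simp add: card_Un_disjoint finE)
    qed
    have m1: "(out - inn) mod (4 * int k) = beta v mod (4 * int k)"
      using BO v unfolding beta_orientation_def out_def inn_def E2_def en2_def by simp
    have m2: "beta v mod (4 * int k) = (2 * int k * int (pos_degree E ends sigma v)) mod (4 * int k)"
      using assms(4) v by blast
    have "(out - inn) mod (4 * int k) = (2 * int k * int (pos_degree E ends sigma v)) mod (4 * int k)"
      using m1 m2 by (rule trans)
    then have "4 * int k dvd (out - inn) - 2 * int k * int (pos_degree E ends sigma v)"
      by (simp only: mod_eq_dvd_iff)
    then have "4 * int k dvd (out - inn) - 2 * int k * int (a + b)"
      unfolding C .
    then obtain t where t: "(out - inn) - 2 * int k * (int a + int b) = 4 * int k * t"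
      by (auto elim!: dvdE)
    have sumf: "(\<Sum>e\<in>{e\<in>E. tail ends DG e = v}. f e) - (\<Sum>e\<in>{e\<in>E. head ends DG e = v}. f e)
        = N * (out - inn) + (2 * KN * int a - 2 * KN * int b)"
      unfolding tDG f_def sum.distrib A[symmetric] Bp Bq by simp
    have "N * (out - inn) + (2 * KN * int a - 2 * KN * int b) = int p * (t + int a)"
    proof -
      have "N * (out - inn) = N * (4 * int k * t + 2 * int k * (int a + int b))" using t by (simp add: algebra_simps)
      then show ?thesis unfolding pint KN_def by (simp add: algebra_simps)
    qed
    then show ?thesis unfolding sumf by simp
  qed
  have flow: "circular_flow p q V E ends sigma DG f"
    unfolding circular_flow_def using fpos fneg bnd by blast
  define Sset where "Sset = {real p / real q | p q. p > 0 \<and> q > 0 \<and> even p \<and>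
                                 (\<exists>D f. circular_flow p q V E ends sigma D f)}"
  have pq: "p > 0" "q > 0" "even p" using k by (auto simp: p_def q_def Nn_def)
  have "\<exists>p' q'. real p / real q = real p' / real q' \<and> p' > 0 \<and> q' > 0 \<and> even p' \<and>
      (\<exists>D f. circular_flow p' q' V E ends sigma D f)"
    apply (rule exI[of _ p], rule exI[of _ q])
    using pq flow by blast
  then have mem: "real p / real q \<in> Sset" by (simp only: Sset_def mem_Collect_eq)
  have bdd: "bdd_below Sset" unfolding Sset_def bdd_below_def
    by (rule exI[of _ 0]) auto
  have "circular_flow_index V E ends sigma \<le> real p / real q"
    unfolding circular_flow_index_def Sset_def[symmetric] using mem bdd by (rule cInf_lower)
  also have "real p / real q < 2 * real k / (real k - 1)"
  proof -
    have r1: "real p = 4 * real k * real Nn" by (simp add: p_def)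
    have r2: "real q = 2 * (real k - 1) * real Nn + 1" using k by (simp add: q_def of_nat_diff)
    have kk: "real k - 1 > 0" using k by simp
    have Np: "real Nn > 0" by (simp add: Nn_def)
    have "4 * real k * real Nn * (real k - 1) < 2 * real k * (2 * (real k - 1) * real Nn + 1)"
      using k by (simp add: algebra_simps)
    moreover have qp: "0 < 2 * (real k - 1) * real Nn + 1" using kk Np by (intro add_pos_pos mult_pos_pos) auto
    ultimately show ?thesis unfolding r1 r2 using kk Np
      by (simp add: divide_simps mult_pos_pos)
  qed
  finally show ?thesis .
qed

end
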